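(* There is an absolute constant $C_0$ such that the following holds. Let $a,b$ be positive integers and $\delta,\nu\in\mathbb{N}^{-1}$ with $\nu^a\delta^{-1},\nu^b\delta^{-1}\in\mathbb{N}$, and let $E>10^3$. Then $$\mathcal{M}_{2,a,b}(\delta,\nu,E)\le C_E\,\mathcal{M}_{2,b,a}(\delta,\nu,E/C_0)^{1/3}\,\mathcal{M}_{1,a,b}(\delta,\nu,E/C_0)^{2/3},$$ where $C_E$ depends only on $E$.
   Context: Write $e(z)=e^{2\pi i z}$, $\gamma(\xi)=(\xi,\xi^2,\xi^3)$, and for an interval $J\subset[0,1]$ and $g:[0,1]\to\mathbb{C}$, $(\mathcal{E}_J g)(x)=\int_J g(\xi)e(x\cdot\gamma(\xi))d\xi$, $x\in\mathbb{R}^3$. For an interval $I$ and $\sigma>0$ with $|I|/\sigma\in\mathbb{N}$, $P_\sigma(I)$ is the partition of $I$ into intervals of length $\sigma$. For an interval $I\subset[0,1]$ with center $c_I$, let $\mathcal{T}_I=\{x\in\mathbb{R}^3:|x\cdot\gamma'(c_I)|\le|I|^{-1},|x\cdot\gamma''(c_I)|\le|I|^{-2},|x\cdot\gamma'''(c_I)|\le|I|^{-3}\}$. For a parallelepiped $T=A[0,1]^3+c$ ($A$ invertible) and $E>0$, $w_{T,E}(x)=(1+|A^{-1}(x-c)|)^{-E}$ and $\phi_{T,E}(x)=|\det A|^{-1}w_{T,E}(x)$. For $\delta,\nu\in\mathbb{N}^{-1}$, $a,b\in\mathbb{N}$, $E>0$: $\mathcal{M}_{1,a,b}(\delta,\nu,E)$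 is the smallest $M$ such that $$\int_{\mathbb{R}^3}\big(|\mathcal{E}_Ig|^2*\phi_{\mathcal{T}_I,E}\big)\big(|\mathcal{E}_{I'}g|^{10}*\phi_{\mathcal{T}_{I'},E}\big)\le M^{12}\Big(\sum_{J\in P_\delta(I)}\|\mathcal{E}_Jg\|_{L^{12}(\mathbb{R}^3)}^4\Big)^{1/2}\Big(\sum_{J'\in P_\delta(I')}\|\mathcal{E}_{J'}g\|_{L^{12}(\mathbb{R}^3)}^4\Big)^{5/2},$$ and $\mathcal{M}_{2,a,b}(\delta,\nu,E)$ is the smallest $M$ such that $$\int_{\mathbb{R}^3}\big(|\mathcal{E}_Ig|^4*\phi_{\mathcal{T}_I,E}\big)\big(|\mathcal{E}_{I'}g|^{8}*\phi_{\mathcal{T}_{I'},E}\big)\le M^{12}\Big(\sum_{J\in P_\delta(I)}\|\mathcal{E}_Jg\|_{L^{12}(\mathbb{R}^3)}^4\Big)\Big(\sum_{J'\in P_\delta(I')}\|\mathcal{E}_{J'}g\|_{L^{12}(\mathbb{R}^3)}^4\Big)^{2},$$ each required for all $g:[0,1]\to\mathbb{C}$ and all $I\in P_{\nu^a}([0,1])$, $I'\in P_{\nu^b}([0,1])$ with $\mathrm{dist}(I,I')\ge\nu$. *)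

theory Defs
  imports "HOL-Analysis.Analysis"
begin

definition ee :: "real \<Rightarrow> complex" where
  "ee z = exp (2 * pi * \<i> * complex_of_real z)"

definition gam :: "real \<Rightarrow> real^3" where
  "gam t = vector [t, t^2, t^3]"
definition gam1 :: "real \<Rightarrow> real^3" where
  "gam1 t = vector [1, 2*t, 3*t^2]"
definition gam2 :: "real \<Rightarrow> real^3" where
  "gam2 t = vector [0, 2, 6*t]"
definition gam3 :: "real \<Rightarrow> real^3" where
  "gam3 t = vector [0, 0, 6]"

definition ext_op :: "real \<Rightarrow> real \<Rightarrow> (real \<Rightarrow> complex) \<Rightarrow> real^3 \<Rightarrow> complex" where
  "ext_op l r g x = (LINT \<xi>:{l..r}|lborel. g \<xi> * ee (x \<bullet> gam \<xi>))"

definition Pint :: "real \<Rightarrow> real \<Rightarrow> real \<Rightarrow> (real \<times> real) set" where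
  "Pint \<sigma> l r = {(l + real j * \<sigma>, l + real (Suc j) * \<sigma>) | j. real (Suc j) * \<sigma> \<le> r - l}"

(* p-th power for nonnegative extended reals, p > 0 *)
definition enn_powr :: "ennreal \<Rightarrow> real \<Rightarrow> ennreal" where
  "enn_powr x p = (if x = \<infinity> then \<infinity> else ennreal (enn2real x powr p))"

definition Lp_pow :: "real \<Rightarrow> (real^3 \<Rightarrow> complex) \<Rightarrow> ennreal" where
  "Lp_pow p f = (\<integral>\<^sup>+ x. ennreal (norm (f x) powr p) \<partial>lborel)"

(* parallelepiped T = A[0,1]^3 + c ; weights *)
definition wT :: "real^3^3 \<Rightarrow> real^3 \<Rightarrow> real \<Rightarrow> real^3 \<Rightarrow> real" where
  "wT A c E x = (1 + norm (matrix_inv A *v (x - c))) powr (-E)"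
definition phiT :: "real^3^3 \<Rightarrow> real^3 \<Rightarrow> real \<Rightarrow> real^3 \<Rightarrow> real" where
  "phiT A c E x = inverse \<bar>det A\<bar> * wT A c E x"

(* T_I = {x : |x.gamma'(c_I)| <= |I|^-1, ...} = L^-1 [-1,1]^3 = A [0,1]^3 + c
   with A = 2 L^-1, c = - L^-1 (1,1,1) *)
definition TL :: "real \<Rightarrow> real \<Rightarrow> real^3^3" where
  "TL l r = (let c = (l + r) / 2; s = r - l in
     vector [s *\<^sub>R gam1 c, s^2 *\<^sub>R gam2 c, s^3 *\<^sub>R gam3 c])"
definition TA :: "real \<Rightarrow> real \<Rightarrow> real^3^3" where
  "TA l r = 2 *\<^sub>R matrix_inv (TL l r)"
definition Tc :: "real \<Rightarrow> real \<Rightarrow> real^3" where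
  "Tc l r = - (matrix_inv (TL l r) *v vector [1, 1, 1])"

definition conv_TI :: "real \<Rightarrow> (real^3 \<Rightarrow> complex) \<Rightarrow> real \<Rightarrow> real \<Rightarrow> real \<Rightarrow> real^3 \<Rightarrow> ennreal" where
  "conv_TI p f l r E x =
     (\<integral>\<^sup>+ y. ennreal (norm (f y) powr p * phiT (TA l r) (Tc l r) E (x - y)) \<partial>lborel)"

definition Ssum :: "real \<Rightarrow> (real \<Rightarrow> complex) \<Rightarrow> real \<Rightarrow> real \<Rightarrow> ennreal" where
  "Ssum \<delta> g l r = (\<Sum>(l', r')\<in>Pint \<delta> l r. enn_powr (Lp_pow 12 (ext_op l' r' g)) (4 / 12))"

definition admissible :: "nat \<Rightarrow> nat \<Rightarrow> real \<Rightarrow> real \<Rightarrow> real \<Rightarrow> real \<Rightarrow> real \<Rightarrow> bool" where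
  "admissible a b \<nu> l r l' r' \<longleftrightarrow>
     (l, r) \<in> Pint (\<nu>^a) 0 1 \<and> (l', r') \<in> Pint (\<nu>^b) 0 1 \<and> setdist {l..r} {l'..r'} \<ge> \<nu>"

definition M1 :: "nat \<Rightarrow> nat \<Rightarrow> real \<Rightarrow> real \<Rightarrow> real \<Rightarrow> ennreal" where
  "M1 a b \<delta> \<nu> E = Inf {M. \<forall>g l r l' r'. set_integrable lborel {0..1} g \<longrightarrow>
      admissible a b \<nu> l r l' r' \<longrightarrow>
      (\<integral>\<^sup>+ x. conv_TI 2 (ext_op l r g) l r E x * conv_TI 10 (ext_op l' r' g) l' r' E x \<partial>lborel)
        \<le> M ^ 12 * enn_powr (Ssum \<delta> g l r) (1/2) * enn_powr (Ssum \<delta> g l' r') (5/2)}"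

definition M2 :: "nat \<Rightarrow> nat \<Rightarrow> real \<Rightarrow> real \<Rightarrow> real \<Rightarrow> ennreal" where
  "M2 a b \<delta> \<nu> E = Inf {M. \<forall>g l r l' r'. set_integrable lborel {0..1} g \<longrightarrow>
      admissible a b \<nu> l r l' r' \<longrightarrow>
      (\<integral>\<^sup>+ x. conv_TI 4 (ext_op l r g) l r E x * conv_TI 8 (ext_op l' r' g) l' r' E x \<partial>lborel)
        \<le> M ^ 12 * Ssum \<delta> g l r * enn_powr (Ssum \<delta> g l' r') 2}"

end

theory Submission
  imports Defs
begin

lemma cont_phiT: "continuous_on UNIV (phiT A c E)"
proof -
  have l: "continuous_on UNIV (\<lambda>x. matrix_inv A *v (x - c))"
    by (intro linear_continuous_on_compose[OF _ matrix_vector_mul_linear] continuous_intros)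
  show ?thesis
  unfolding phiT_def wT_def
  by (intro continuous_intros l) (smt (verit) norm_ge_zero)+
qed
lemma inner_gam: "x \<bullet> gam t = x$1 * t + x$2 * t^2 + x$3 * t^3"
  by (simp add: gam_def inner_vec_def sum_3)
lemma meas_ee_prod: "(\<lambda>(x::real^3, t::real). ee (x \<bullet> gam t)) \<in> borel_measurable (lborel \<Otimes>\<^sub>M lborel)"
proof -
  have "continuous_on UNIV (\<lambda>p::(real^3) \<times> real. ee (fst p \<bullet> gam (snd p)))"
    unfolding ee_def inner_gam
    by (intro continuous_intros)
  then have "(\<lambda>p::(real^3) \<times> real. ee (fst p \<bullet> gam (snd p))) \<in> borel_measurable borel"
    by (rule borel_measurable_continuous_onI)
  then show ?thesis
    by (simp add: case_prod_beta borel_prod[symmetric] measurable_lborel2 cong: measurable_cong_sets)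
qed

lemma meas_ext_op:
  assumes g: "set_integrable lborel {0..1} g" and sub: "{l..r} \<subseteq> {0..1}"
  shows "ext_op l r g \<in> borel_measurable lborel"
proof -
  have gm: "(\<lambda>t. indicator {0..1} t *\<^sub>R g t) \<in> borel_measurable lborel"
    using g unfolding set_integrable_def by (rule borel_measurable_integrable)
  have eq: "\<And>x t. indicator {l..r} t *\<^sub>R (g t * ee (x \<bullet> gam t)) =
     (indicator {l..r} t *\<^sub>R (indicator {0..1} t *\<^sub>R g t)) * ee (x \<bullet> gam t)"
    using sub by (auto simp: indicator_def)
  have m: "(\<lambda>(x::real^3, t::real). (indicator {l..r} t *\<^sub>R (indicator {0..1} t *\<^sub>R g t)) * ee (x \<bullet> gam t)) \<in> borel_measurable (lborel \<Otimes>\<^sub>M lborel)"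
  proof -
    have a: "(\<lambda>p::(real^3)\<times>real. indicator {l..r} (snd p) *\<^sub>R (indicator {0..1} (snd p) *\<^sub>R g (snd p))) \<in> borel_measurable (lborel \<Otimes>\<^sub>M lborel)"
      using gm by measurable
    have b: "(\<lambda>p::(real^3)\<times>real. ee (fst p \<bullet> gam (snd p))) \<in> borel_measurable (lborel \<Otimes>\<^sub>M lborel)"
      using meas_ee_prod by (simp add: case_prod_beta)
    show ?thesis using borel_measurable_times[OF a b] by (simp add: case_prod_beta)
  qed
  have "(\<lambda>x. integral\<^sup>L lborel (\<lambda>t. (indicator {l..r} t *\<^sub>R (indicator {0..1} t *\<^sub>R g t)) * ee (x \<bullet> gam t))) \<in> borel_measurable lborel"
    by (rule lborel.borel_measurable_lebesgue_integral[OF m])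
  then show ?thesis
    unfolding ext_op_def set_lebesgue_integral_def eq[symmetric] by (simp add: fun_eq_iff)
qed

lemma meas_phiT: "phiT A c E \<in> borel_measurable borel"
  using cont_phiT by (rule borel_measurable_continuous_onI)

lemma meas_conv_integrand:
  assumes F: "F \<in> borel_measurable lborel"
  shows "(\<lambda>(x::real^3, y::real^3). ennreal (norm (F y) powr p * phiT A c E (x - y))) \<in> borel_measurable (lborel \<Otimes>\<^sub>M lborel)"
proof -
  have Fb: "F \<in> borel_measurable borel" using F by simp
  have a: "(\<lambda>q::(real^3)\<times>(real^3). norm (F (snd q)) powr p) \<in> borel_measurable (lborel \<Otimes>\<^sub>M lborel)"
    using F by measurable
  have "(\<lambda>q::(real^3)\<times>(real^3). phiT A c E (fst q - snd q)) \<in> borel_measurable borel"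
    by (intro borel_measurable_continuous_onI continuous_on_compose2[OF cont_phiT] continuous_intros) auto
  then have b: "(\<lambda>q::(real^3)\<times>(real^3). phiT A c E (fst q - snd q)) \<in> borel_measurable (lborel \<Otimes>\<^sub>M lborel)"
    by (simp add: borel_prod[symmetric] cong: measurable_cong_sets)
  show ?thesis using borel_measurable_times[OF a b] by (simp add: case_prod_beta)
qed

lemma meas_conv:
  assumes F: "F \<in> borel_measurable lborel"
  shows "conv_TI p F l r E \<in> borel_measurable lborel"
  unfolding conv_TI_def
  by (rule lborel.borel_measurable_nn_integral) (use meas_conv_integrand[OF F] in simp)


lemma enn_powr_ennreal: "0 \<le> t \<Longrightarrow> enn_powr (ennreal t) p = ennreal (t powr p)"
  by (simp add: enn_powr_def)
lemma enn_powr_zero[simp]: "enn_powr 0 p = 0"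
  by (simp add: enn_powr_def)
lemma enn_powr_top[simp]: "enn_powr top p = top"
  by (simp add: enn_powr_def)

lemma enn_powr_mono: assumes "a \<le> b" "0 \<le> p" shows "enn_powr a p \<le> enn_powr b p"
proof (cases b)
  case (real s)
  with assms(1) obtain t where t: "a = ennreal t" "0 \<le> t" "t \<le> s"
    by (metis ennreal_cases ennreal_le_iff ennreal_neq_top top.extremum_uniqueI)
  then show ?thesis using real assms by (simp add: enn_powr_ennreal powr_mono2 ennreal_leI)
next
  case top then show ?thesis by simp
qed

lemma enn_powr_eq_0_iff: "0 < p \<Longrightarrow> enn_powr a p = 0 \<longleftrightarrow> a = 0"
  by (cases a) (auto simp: enn_powr_ennreal)

lemma enn_powr_mult: assumes "0 < p" shows "enn_powr (a * b) p = enn_powr a p * enn_powr b p"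
proof (cases a)
  case (real s)
  note as = real
  show ?thesis
  proof (cases b)
    case (real t)
    then show ?thesis using as by (simp add: enn_powr_ennreal ennreal_mult'[symmetric] powr_mult)
  next
    case top
    then show ?thesis using as assms
      by (cases "s = 0") (auto simp: enn_powr_ennreal ennreal_mult_top)
  qed
next
  case top
  then show ?thesis using assms
    by (cases "b = 0") (auto simp: enn_powr_eq_0_iff ennreal_top_mult)
qed

lemma enn_powr_powr: assumes "0 < p" "0 < q" shows "enn_powr (enn_powr a p) q = enn_powr a (p * q)"
  by (cases a) (auto simp: enn_powr_ennreal powr_powr)

lemma enn_powr_add: assumes "0 < p" "0 < q" shows "enn_powr a p * enn_powr a q = enn_powr a (p + q)"
proof (cases a)
  case (real s)
  then show ?thesis by (simp add: enn_powr_ennreal ennreal_mult'[symmetric] powr_add)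
next
  case top then show ?thesis using assms by simp
qed

lemma enn_powr_one[simp]: "enn_powr a 1 = a"
  by (cases a) (auto simp: enn_powr_ennreal)

lemma young_pt:
  fixes a b U V \<theta> :: real
  assumes "0 \<le> a" "0 \<le> b" "0 < U" "0 < V" "0 < \<theta>" "\<theta> < 1"
  shows "a powr \<theta> * b powr (1-\<theta>) \<le> (U powr \<theta> * V powr (1-\<theta>) * \<theta> / U) * a + (U powr \<theta> * V powr (1-\<theta>) * (1-\<theta>) / V) * b"
proof (cases "a = 0 \<or> b = 0")
  case True
  then show ?thesis using assms by (auto intro!: add_nonneg_nonneg mult_nonneg_nonneg)
next
  case False
  then have ab: "0 < a" "0 < b" using assms by auto
  have y: "(a/U) powr \<theta> * (b/V) powr (1-\<theta>) \<le> \<theta> * (a/U) + (1-\<theta>) * (b/V)"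
    using assms ab by (intro Youngs_inequality_0) auto
  have "a powr \<theta> * b powr (1-\<theta>) = (U powr \<theta> * V powr (1-\<theta>)) * ((a/U) powr \<theta> * (b/V) powr (1-\<theta>))"
    using assms ab by (simp add: powr_divide field_simps)
  also have "\<dots> \<le> (U powr \<theta> * V powr (1-\<theta>)) * (\<theta> * (a/U) + (1-\<theta>) * (b/V))"
    using y assms by (intro mult_left_mono) auto
  also have "\<dots> = (U powr \<theta> * V powr (1-\<theta>) * \<theta> / U) * a + (U powr \<theta> * V powr (1-\<theta>) * (1-\<theta>) / V) * b"
    by (simp add: field_simps)
  finally show ?thesis .
qed

lemma holder_enn:
  assumes u: "u \<in> borel_measurable M" and v: "v \<in> borel_measurable M"
    and th: "0 < \<theta>" "\<theta> < 1"
  shows "(\<integral>\<^sup>+x. enn_powr (u x) \<theta> * enn_powr (v x) (1-\<theta>) \<partial>M)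
     \<le> enn_powr (\<integral>\<^sup>+x. u x \<partial>M) \<theta> * enn_powr (\<integral>\<^sup>+x. v x \<partial>M) (1-\<theta>)"
proof -
  define U where "U = (\<integral>\<^sup>+x. u x \<partial>M)"
  define V where "V = (\<integral>\<^sup>+x. v x \<partial>M)"
  show ?thesis
  proof (cases "U = 0 \<or> V = 0")
    case True
    then have "AE x in M. u x = 0 \<or> v x = 0"
      using nn_integral_0_iff_AE[OF u] nn_integral_0_iff_AE[OF v] unfolding U_def V_def
      by auto
    then have ae0: "AE x in M. enn_powr (u x) \<theta> * enn_powr (v x) (1-\<theta>) = 0"
      by eventually_elim auto
    have "(\<integral>\<^sup>+x. enn_powr (u x) \<theta> * enn_powr (v x) (1-\<theta>) \<partial>M) = 0"
      using nn_integral_cong_AE[OF ae0] by simp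
    then show ?thesis by simp
  next
    case False
    note nz = False
    show ?thesis
    proof (cases "U = top \<or> V = top")
      case True
      then have "enn_powr U \<theta> * enn_powr V (1-\<theta>) = top"
        using nz th by (auto simp: enn_powr_eq_0_iff ennreal_top_mult ennreal_mult_top)
      then show ?thesis unfolding U_def V_def by simp
    next
      case False
      then obtain U0 V0 where UV: "U = ennreal U0" "V = ennreal V0" "0 < U0" "0 < V0"
        using nz by (metis ennreal_cases ennreal_eq_0_iff not_less)
      define c where "c = U0 powr \<theta> * V0 powr (1-\<theta>)"
      define k1 where "k1 = c * \<theta> / U0"
      define k2 where "k2 = c * (1-\<theta>) / V0"
      have k: "0 \<le> k1" "0 < k1" "0 < k2" using UV th by (auto simp: k1_def k2_def c_def)
      have pt: "enn_powr (u x) \<theta> * enn_powr (v x) (1-\<theta>) \<le> ennreal k1 * u x + ennreal k2 * v x" for x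
      proof (cases "u x = top \<or> v x = top")
        case True then show ?thesis using k by (auto simp: ennreal_mult_top)
      next
        case False
        then obtain a b where ab: "u x = ennreal a" "v x = ennreal b" "0 \<le> a" "0 \<le> b"
          by (metis ennreal_cases)
        have "a powr \<theta> * b powr (1-\<theta>) \<le> k1 * a + k2 * b"
          unfolding k1_def k2_def c_def using young_pt[of a b U0 V0 \<theta>] ab UV th by simp
        then show ?thesis using ab k
          by (simp add: enn_powr_ennreal ennreal_mult'[symmetric] ennreal_mult''[symmetric] ennreal_plus[symmetric] ennreal_leI del: ennreal_plus)
      qed
      have "(\<integral>\<^sup>+x. enn_powr (u x) \<theta> * enn_powr (v x) (1-\<theta>) \<partial>M) \<le> (\<integral>\<^sup>+x. ennreal k1 * u x + ennreal k2 * v x \<partial>M)"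
        by (intro nn_integral_mono pt)
      also have "\<dots> = ennreal k1 * U + ennreal k2 * V"
        unfolding U_def V_def using u v by (simp add: nn_integral_add nn_integral_cmult)
      also have "\<dots> = ennreal (k1 * U0 + k2 * V0)"
        using UV k by (simp add: ennreal_mult'[symmetric] ennreal_plus[symmetric] del: ennreal_plus)
      also have "k1 * U0 + k2 * V0 = c"
        using UV by (simp add: k1_def k2_def field_simps)
      also have "ennreal c = enn_powr U \<theta> * enn_powr V (1-\<theta>)"
        using UV by (simp add: c_def enn_powr_ennreal ennreal_mult'[symmetric])
      finally show ?thesis unfolding U_def V_def .
    qed
  qed
qed


lemma phiT_nonneg: "0 \<le> phiT A c E x"
  unfolding phiT_def wT_def by simp

lemma powr_interp:
  fixes n f :: real
  assumes "0 \<le> n" "0 \<le> f" "0 < \<theta>" "\<theta> < 1"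
  shows "(n powr q1 * f) powr \<theta> * (n powr q2 * f) powr (1-\<theta>) = n powr (\<theta>*q1 + (1-\<theta>)*q2) * f"
proof -
  have "(n powr q1 * f) powr \<theta> * (n powr q2 * f) powr (1-\<theta>)
     = (n powr (q1*\<theta>) * n powr (q2*(1-\<theta>))) * (f powr \<theta> * f powr (1-\<theta>))"
    using assms by (simp add: powr_mult powr_powr)
  also have "\<dots> = n powr (\<theta>*q1 + (1-\<theta>)*q2) * f powr 1"
    by (simp add: powr_add[symmetric] mult.commute)
  also have "\<dots> = n powr (\<theta>*q1 + (1-\<theta>)*q2) * f"
    using assms by simp
  finally show ?thesis .
qed

lemma conv_holder:
  assumes F: "F \<in> borel_measurable lborel" and th: "0 < \<theta>" "\<theta> < 1"
    and p: "p = \<theta>*q1 + (1-\<theta>)*q2"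
  shows "conv_TI p F l r E x \<le> enn_powr (conv_TI q1 F l r E x) \<theta> * enn_powr (conv_TI q2 F l r E x) (1-\<theta>)"
proof -
  have ph: "(\<lambda>y. phiT A c E' (x - y)) \<in> borel_measurable lborel" for A c E'
  proof -
    have "(\<lambda>y. phiT A c E' (x - y)) \<in> borel_measurable borel"
      by (intro borel_measurable_continuous_onI continuous_on_compose2[OF cont_phiT] continuous_intros) auto
    then show ?thesis by simp
  qed
  have m: "(\<lambda>y. ennreal (norm (F y) powr q * phiT (TA l r) (Tc l r) E (x - y))) \<in> borel_measurable lborel" for q
    using F ph[of "TA l r" "Tc l r" E] by measurable
  have eq: "ennreal (norm (F y) powr p * phiT (TA l r) (Tc l r) E (x - y)) =
     enn_powr (ennreal (norm (F y) powr q1 * phiT (TA l r) (Tc l r) E (x - y))) \<theta> *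
     enn_powr (ennreal (norm (F y) powr q2 * phiT (TA l r) (Tc l r) E (x - y))) (1-\<theta>)" for y
    using th phiT_nonneg[of "TA l r" "Tc l r" E "x - y"]
    by (simp add: enn_powr_ennreal ennreal_mult'[symmetric] powr_interp p)
  show ?thesis
    unfolding conv_TI_def eq
    by (rule holder_enn[OF m m th])
qed

lemma core:
  assumes F: "F \<in> borel_measurable lborel" and G: "G \<in> borel_measurable lborel"
  shows "(\<integral>\<^sup>+x. conv_TI 4 F l r E x * conv_TI 8 G l' r' E x \<partial>lborel)
    \<le> enn_powr (\<integral>\<^sup>+x. conv_TI 4 G l' r' E x * conv_TI 8 F l r E x \<partial>lborel) (1/3)
     * enn_powr (\<integral>\<^sup>+x. conv_TI 2 F l r E x * conv_TI 10 G l' r' E x \<partial>lborel) (2/3)"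
proof -
  have t: "(0::real) < 1/3" "(1::real)/3 < 1" by auto
  have pw: "conv_TI 4 F l r E x * conv_TI 8 G l' r' E x \<le>
     enn_powr (conv_TI 4 G l' r' E x * conv_TI 8 F l r E x) (1/3) *
     enn_powr (conv_TI 2 F l r E x * conv_TI 10 G l' r' E x) (1-1/3)" for x
  proof -
    have a: "conv_TI 4 F l r E x \<le> enn_powr (conv_TI 8 F l r E x) (1/3) * enn_powr (conv_TI 2 F l r E x) (1-1/3)"
      by (rule conv_holder[OF F t]) simp
    have b: "conv_TI 8 G l' r' E x \<le> enn_powr (conv_TI 4 G l' r' E x) (1/3) * enn_powr (conv_TI 10 G l' r' E x) (1-1/3)"
      by (rule conv_holder[OF G t]) simp
    have "conv_TI 4 F l r E x * conv_TI 8 G l' r' E x \<le>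
      (enn_powr (conv_TI 8 F l r E x) (1/3) * enn_powr (conv_TI 2 F l r E x) (1-1/3)) *
      (enn_powr (conv_TI 4 G l' r' E x) (1/3) * enn_powr (conv_TI 10 G l' r' E x) (1-1/3))"
      by (intro mult_mono a b) auto
    also have "\<dots> = enn_powr (conv_TI 4 G l' r' E x * conv_TI 8 F l r E x) (1/3) *
     enn_powr (conv_TI 2 F l r E x * conv_TI 10 G l' r' E x) (1-1/3)"
      by (simp add: enn_powr_mult mult_ac)
    finally show ?thesis .
  qed
  have "(\<integral>\<^sup>+x. conv_TI 4 F l r E x * conv_TI 8 G l' r' E x \<partial>lborel) \<le>
     (\<integral>\<^sup>+x. enn_powr (conv_TI 4 G l' r' E x * conv_TI 8 F l r E x) (1/3) *
     enn_powr (conv_TI 2 F l r E x * conv_TI 10 G l' r' E x) (1-1/3) \<partial>lborel)"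
    by (intro nn_integral_mono pw)
  also have "\<dots> \<le> enn_powr (\<integral>\<^sup>+x. conv_TI 4 G l' r' E x * conv_TI 8 F l r E x \<partial>lborel) (1/3)
     * enn_powr (\<integral>\<^sup>+x. conv_TI 2 F l r E x * conv_TI 10 G l' r' E x \<partial>lborel) (1-1/3)"
    by (rule holder_enn[OF _ _ t]) (intro borel_measurable_times_ennreal meas_conv F G)+
  finally show ?thesis by simp
qed


lemma enn_powr_eq_top_iff: "enn_powr a p = top \<longleftrightarrow> a = top"
  by (simp add: enn_powr_def)

lemma enn_powr_nat: "0 < n \<Longrightarrow> enn_powr x (real n) = x ^ n"
  by (cases x) (auto simp: enn_powr_ennreal ennreal_power powr_realpow' )

lemma up12: fixes A M M' K :: ennreal shows "A \<le> M^12 * K \<Longrightarrow> M \<le> M' \<Longrightarrow> A \<le> M'^12 * K"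
  by (meson order_trans mult_right_mono power_mono zero_le)

lemma arith_main:
  fixes A B C S T x y :: ennreal
  assumes hA: "A \<le> enn_powr B (1/3) * enn_powr C (2/3)"
    and hB: "B \<le> x^12 * T * enn_powr S 2"
    and hC: "C \<le> y^12 * enn_powr S (1/2) * enn_powr T (5/2)"
  shows "A \<le> (enn_powr x (1/3) * enn_powr y (2/3))^12 * S * enn_powr T 2"
proof -
  have x12: "x^12 = enn_powr x 12" using enn_powr_nat[of 12 x] by simp
  have y12: "y^12 = enn_powr y 12" using enn_powr_nat[of 12 y] by simp
  have "A \<le> enn_powr (x^12 * T * enn_powr S 2) (1/3) * enn_powr (y^12 * enn_powr S (1/2) * enn_powr T (5/2)) (2/3)"
    using hA by (rule order_trans) (intro mult_mono enn_powr_mono hB hC; simp)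
  also have "\<dots> = (enn_powr x 4 * enn_powr y 8) * (enn_powr S (2/3) * enn_powr S (1/3)) * (enn_powr T (1/3) * enn_powr T (5/3))"
    unfolding x12 y12 by (simp add: enn_powr_mult enn_powr_powr mult_ac)
  also have "\<dots> = (enn_powr x 4 * enn_powr y 8) * S * enn_powr T 2"
    by (simp add: enn_powr_add)
  also have "enn_powr x 4 * enn_powr y 8 = (enn_powr x (1/3) * enn_powr y (2/3))^12"
  proof -
    have "(enn_powr x (1/3) * enn_powr y (2/3))^12 = enn_powr (enn_powr x (1/3) * enn_powr y (2/3)) 12"
      using enn_powr_nat[of 12] by simp
    also have "\<dots> = enn_powr x 4 * enn_powr y 8"
      by (simp add: enn_powr_mult enn_powr_powr)
    finally show ?thesis by simp
  qed
  finally show ?thesis .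
qed

lemma zero_by_eps:
  fixes C K :: ennreal
  assumes K: "K < top" and h: "\<And>y. 0 < y \<Longrightarrow> C \<le> ennreal y ^ 12 * K"
  shows "C = 0"
proof -
  obtain k where k: "K = ennreal k" "0 \<le> k" using K by (cases K) auto
  have "C \<le> 0"
  proof (rule ennreal_le_epsilon)
    fix e :: real assume e: "0 < e"
    define y where "y = min 1 (e / (k+1))"
    have y: "0 < y" "y \<le> 1" "y \<le> e/(k+1)" using e k by (auto simp: y_def)
    have "y^12 \<le> y^1" using y by (intro power_decreasing) auto
    then have "y^12 * k \<le> y * k" using k by (intro mult_right_mono) auto
    also have "\<dots> \<le> e/(k+1) * k" using y k by (intro mult_right_mono) auto
    also have "\<dots> \<le> e" using e k by (simp add: field_simps)
    finally have "ennreal (y^12 * k) \<le> ennreal e" by (rule ennreal_leI)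
    moreover have "ennreal y ^ 12 * K = ennreal (y^12 * k)"
      using k y by (simp add: ennreal_power ennreal_mult')
    ultimately show "C \<le> 0 + ennreal e" using h[OF y(1)] by simp
  qed
  then show ?thesis by simp
qed

lemma lim_arg:
  fixes z :: ennreal and X0 Y0 :: real
  assumes X0: "0 \<le> X0" and Y0: "0 \<le> Y0"
    and h: "\<And>t. 0 < t \<Longrightarrow> z \<le> ennreal ((X0+t) powr (1/3) * (Y0+t) powr (2/3))"
  shows "z \<le> ennreal (X0 powr (1/3) * Y0 powr (2/3))"
proof -
  define f where "f t = (X0+t) powr (1/3) * (Y0+t) powr (2/3)" for t
  have "z < top" using h[of 1] by (simp add: top.not_eq_extremum le_less_trans)
  then obtain m where m: "z = ennreal m" "0 \<le> m" by (cases z) auto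
  have le: "m \<le> f t" if "0 < t" for t
    using h[OF that] m X0 Y0 that by (simp add: f_def ennreal_le_iff)
  have ev: "eventually (\<lambda>t. (0::real) < t) (at_right 0)"
    by (simp add: eventually_at_right_less)
  have tl: "(f \<longlongrightarrow> f 0) (at_right 0)"
    unfolding f_def
    by (intro tendsto_intros tendsto_powr') (auto intro: eventually_mono[OF ev] simp: X0 Y0 add_nonneg_pos)
  have "m \<le> f 0"
    by (rule tendsto_lowerbound[OF tl]) (auto intro: eventually_mono[OF ev] le)
  then show ?thesis using m by (simp add: f_def ennreal_leI)
qed

lemma top_helper:
  assumes "enn_powr S p * enn_powr T q = top" "0 < p" "0 < q" "0 < p'" "0 < q'"
  shows "enn_powr S p' * enn_powr T q' = top"
proof -
  have "(S = top \<and> T \<noteq> 0) \<or> (T = top \<and> S \<noteq> 0)"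
    using assms(1) unfolding ennreal_mult_eq_top_iff enn_powr_eq_top_iff
    using enn_powr_eq_0_iff[OF assms(2)] enn_powr_eq_0_iff[OF assms(3)] by metis
  then show ?thesis
    unfolding ennreal_mult_eq_top_iff enn_powr_eq_top_iff
    using enn_powr_eq_0_iff[OF assms(4)] enn_powr_eq_0_iff[OF assms(5)] by metis
qed

lemma rhs_top:
  assumes "X \<noteq> 0" "Y \<noteq> 0" "\<not> (X < top \<and> Y < top)" "0 < p" "0 < q"
  shows "enn_powr X p * enn_powr Y q = top"
proof -
  have "X = top \<or> Y = top" using assms(3) top.not_eq_extremum by blast
  then show ?thesis
    unfolding ennreal_mult_eq_top_iff enn_powr_eq_top_iff
    using enn_powr_eq_0_iff[OF assms(4)] enn_powr_eq_0_iff[OF assms(5)] assms(1,2) by metis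
qed

lemma top_rhs: fixes \<rho> :: real assumes "0 < \<rho>" "S * T2 = top"
  shows "A \<le> ennreal \<rho> ^ 12 * S * T2"
proof -
  have "ennreal \<rho> ^ 12 \<noteq> 0" using assms(1) by simp
  then have "ennreal \<rho> ^ 12 * (S * T2) = top" using assms(2) by (simp add: ennreal_mult_eq_top_iff)
  then show ?thesis by (simp add: mult.assoc)
qed


lemma Pint_sub: assumes "(l, r) \<in> Pint \<sigma> 0 1" "0 \<le> \<sigma>" shows "{l..r} \<subseteq> {0..1}"
  using assms by (auto simp: Pint_def)

lemma adm_sub: assumes "admissible a b \<nu> l r l' r'" "0 \<le> \<nu>"
  shows "{l..r} \<subseteq> {0..1}" "{l'..r'} \<subseteq> {0..1}"
  using assms Pint_sub by (auto simp: admissible_def)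

lemma adm_swap: "admissible a b \<nu> l r l' r' \<Longrightarrow> admissible b a \<nu> l' r' l r"
  by (auto simp: admissible_def setdist_sym)

lemma key:
  assumes nu: "0 \<le> \<nu>"
  shows "M2 a b \<delta> \<nu> E \<le> enn_powr (M2 b a \<delta> \<nu> E) (1/3) * enn_powr (M1 a b \<delta> \<nu> E) (2/3)"
proof -
  define X where "X = M2 b a \<delta> \<nu> E"
  define Y where "Y = M1 a b \<delta> \<nu> E"
  define A where "A g l r l' r' = (\<integral>\<^sup>+x. conv_TI 4 (ext_op l r g) l r E x * conv_TI 8 (ext_op l' r' g) l' r' E x \<partial>lborel)" for g l r l' r'
  define B where "B g l r l' r' = (\<integral>\<^sup>+x. conv_TI 4 (ext_op l' r' g) l' r' E x * conv_TI 8 (ext_op l r g) l r E x \<partial>lborel)" for g l r l' r'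
  define C where "C g l r l' r' = (\<integral>\<^sup>+x. conv_TI 2 (ext_op l r g) l r E x * conv_TI 10 (ext_op l' r' g) l' r' E x \<partial>lborel)" for g l r l' r'
  have M2ab: "M2 a b \<delta> \<nu> E = Inf {M. \<forall>g l r l' r'. set_integrable lborel {0..1} g \<longrightarrow>
      admissible a b \<nu> l r l' r' \<longrightarrow> A g l r l' r' \<le> M ^ 12 * Ssum \<delta> g l r * enn_powr (Ssum \<delta> g l' r') 2}"
    unfolding M2_def A_def ..
  have hA: "A g l r l' r' \<le> enn_powr (B g l r l' r') (1/3) * enn_powr (C g l r l' r') (2/3)"
    if "set_integrable lborel {0..1} g" "admissible a b \<nu> l r l' r'" for g l r l' r'
    unfolding A_def B_def C_def
    by (rule core) (intro meas_ext_op that adm_sub[OF that(2) nu])+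
  have hB: "B g l r l' r' \<le> Mx^12 * Ssum \<delta> g l' r' * enn_powr (Ssum \<delta> g l r) 2"
    if "set_integrable lborel {0..1} g" "admissible a b \<nu> l r l' r'" "X < Mx" for g l r l' r' Mx
  proof -
    from that(3) obtain M0 where M0: "M0 < Mx" and "\<forall>g l r l' r'. set_integrable lborel {0..1} g \<longrightarrow>
      admissible b a \<nu> l r l' r' \<longrightarrow>
      (\<integral>\<^sup>+ x. conv_TI 4 (ext_op l r g) l r E x * conv_TI 8 (ext_op l' r' g) l' r' E x \<partial>lborel)
        \<le> M0 ^ 12 * Ssum \<delta> g l r * enn_powr (Ssum \<delta> g l' r') 2"
      unfolding X_def M2_def Inf_less_iff by blast
    then have "B g l r l' r' \<le> M0^12 * Ssum \<delta> g l' r' * enn_powr (Ssum \<delta> g l r) 2"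
      using that(1) adm_swap[OF that(2)] unfolding B_def by blast
    then have "B g l r l' r' \<le> M0^12 * (Ssum \<delta> g l' r' * enn_powr (Ssum \<delta> g l r) 2)"
      by (simp only: mult.assoc)
    then have "B g l r l' r' \<le> Mx^12 * (Ssum \<delta> g l' r' * enn_powr (Ssum \<delta> g l r) 2)"
      by (rule up12) (rule less_imp_le[OF M0])
    then show ?thesis by (simp only: mult.assoc)
  qed
  have hC: "C g l r l' r' \<le> My^12 * enn_powr (Ssum \<delta> g l r) (1/2) * enn_powr (Ssum \<delta> g l' r') (5/2)"
    if "set_integrable lborel {0..1} g" "admissible a b \<nu> l r l' r'" "Y < My" for g l r l' r' My
  proof -
    from that(3) obtain M0 where M0: "M0 < My" and "\<forall>g l r l' r'. set_integrable lborel {0..1} g \<longrightarrow>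
      admissible a b \<nu> l r l' r' \<longrightarrow>
      (\<integral>\<^sup>+ x. conv_TI 2 (ext_op l r g) l r E x * conv_TI 10 (ext_op l' r' g) l' r' E x \<partial>lborel)
        \<le> M0 ^ 12 * enn_powr (Ssum \<delta> g l r) (1/2) * enn_powr (Ssum \<delta> g l' r') (5/2)"
      unfolding Y_def M1_def Inf_less_iff by blast
    then have "C g l r l' r' \<le> M0^12 * enn_powr (Ssum \<delta> g l r) (1/2) * enn_powr (Ssum \<delta> g l' r') (5/2)"
      using that(1,2) unfolding C_def by blast
    then have "C g l r l' r' \<le> M0^12 * (enn_powr (Ssum \<delta> g l r) (1/2) * enn_powr (Ssum \<delta> g l' r') (5/2))"
      by (simp only: mult.assoc)
    then have "C g l r l' r' \<le> My^12 * (enn_powr (Ssum \<delta> g l r) (1/2) * enn_powr (Ssum \<delta> g l' r') (5/2))"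
      by (rule up12) (rule less_imp_le[OF M0])
    then show ?thesis by (simp only: mult.assoc)
  qed
  show ?thesis
  proof (cases "Y = 0")
    case Y0: True
    have "M2 a b \<delta> \<nu> E \<le> ennreal \<rho>" if \<rho>: "0 < \<rho>" for \<rho>
      unfolding M2ab
    proof (rule Inf_lower, safe)
      fix g :: "real \<Rightarrow> complex" and l r l' r' :: real assume g: "set_integrable lborel {0..1} g" and ad: "admissible a b \<nu> l r l' r'"
      define S where "S = Ssum \<delta> g l r"
      define T where "T = Ssum \<delta> g l' r'"
      show "A g l r l' r' \<le> ennreal \<rho> ^ 12 * Ssum \<delta> g l r * enn_powr (Ssum \<delta> g l' r') 2"
      proof (cases "enn_powr S (1/2) * enn_powr T (5/2) = top")
        case True
        have "enn_powr S 1 * enn_powr T 2 = top"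
          by (rule top_helper[OF True]) auto
        then have "S * enn_powr T 2 = top" by simp
        then show ?thesis unfolding S_def T_def by (rule top_rhs[OF \<rho>])
      next
        case False
        have "C g l r l' r' = 0"
        proof (rule zero_by_eps[where K = "enn_powr S (1/2) * enn_powr T (5/2)"])
          show "enn_powr S (1/2) * enn_powr T (5/2) < top" using False top.not_eq_extremum by blast
          fix y :: real assume "0 < y"
          then have "Y < ennreal y" using Y0 by simp
          from hC[OF g ad this] show "C g l r l' r' \<le> ennreal y ^ 12 * (enn_powr S (1/2) * enn_powr T (5/2))"
            unfolding S_def T_def by (simp only: mult.assoc)
        qed
        then show ?thesis using hA[OF g ad] by simp
      qed
    qed
    note bnd = this
    have "M2 a b \<delta> \<nu> E \<le> 0"
    proof (rule ennreal_le_epsilon)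
      fix e :: real assume "0 < e"
      then show "M2 a b \<delta> \<nu> E \<le> 0 + ennreal e" using bnd[of e] by simp
    qed
    then show ?thesis by simp
  next
    case Ynz: False
    show ?thesis
    proof (cases "X = 0")
      case X0: True
      have "M2 a b \<delta> \<nu> E \<le> ennreal \<rho>" if \<rho>: "0 < \<rho>" for \<rho>
        unfolding M2ab
      proof (rule Inf_lower, safe)
        fix g :: "real \<Rightarrow> complex" and l r l' r' :: real assume g: "set_integrable lborel {0..1} g" and ad: "admissible a b \<nu> l r l' r'"
        define S where "S = Ssum \<delta> g l r"
        define T where "T = Ssum \<delta> g l' r'"
        show "A g l r l' r' \<le> ennreal \<rho> ^ 12 * Ssum \<delta> g l r * enn_powr (Ssum \<delta> g l' r') 2"
        proof (cases "T * enn_powr S 2 = top")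
          case True
          then have tt: "enn_powr T 1 * enn_powr S 2 = top" by simp
          have "enn_powr T 2 * enn_powr S 1 = top"
            by (rule top_helper[OF tt]) auto
          then have "enn_powr S 1 * enn_powr T 2 = top" by (simp only: mult.commute)
          then have "S * enn_powr T 2 = top" by simp
          then show ?thesis unfolding S_def T_def by (rule top_rhs[OF \<rho>])
        next
          case False
          have "B g l r l' r' = 0"
          proof (rule zero_by_eps[where K = "T * enn_powr S 2"])
            show "T * enn_powr S 2 < top" using False top.not_eq_extremum by blast
            fix y :: real assume "0 < y"
            then have "X < ennreal y" using X0 by simp
            from hB[OF g ad this] show "B g l r l' r' \<le> ennreal y ^ 12 * (T * enn_powr S 2)"
              unfolding S_def T_def by (simp only: mult.assoc)
          qed
          then show ?thesis using hA[OF g ad] by simp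
        qed
      qed
      note bnd = this
      have "M2 a b \<delta> \<nu> E \<le> 0"
      proof (rule ennreal_le_epsilon)
        fix e :: real assume "0 < e"
        then show "M2 a b \<delta> \<nu> E \<le> 0 + ennreal e" using bnd[of e] by simp
      qed
      then show ?thesis by simp
    next
      case Xnz: False
      show ?thesis
      proof (cases "X < top \<and> Y < top")
        case True
        then have "X \<noteq> top" "Y \<noteq> top" by auto
        then obtain X0 Y0 where XY: "X = ennreal X0" "Y = ennreal Y0" "0 \<le> X0" "0 \<le> Y0"
          by (cases X; cases Y) auto
        have "M2 a b \<delta> \<nu> E \<le> ennreal ((X0+t) powr (1/3) * (Y0+t) powr (2/3))" if t: "0 < t" for t
          unfolding M2ab
        proof (rule Inf_lower, safe)
          fix g :: "real \<Rightarrow> complex" and l r l' r' :: real assume g: "set_integrable lborel {0..1} g" and ad: "admissible a b \<nu> l r l' r'"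
          have xX: "X < ennreal (X0 + t)" using XY t by (simp add: ennreal_lessI)
          have yY: "Y < ennreal (Y0 + t)" using XY t by (simp add: ennreal_lessI)
          have "A g l r l' r' \<le> (enn_powr (ennreal (X0+t)) (1/3) * enn_powr (ennreal (Y0+t)) (2/3))^12 * Ssum \<delta> g l r * enn_powr (Ssum \<delta> g l' r') 2"
            by (rule arith_main[OF hA[OF g ad] hB[OF g ad xX] hC[OF g ad yY]])
          also have "enn_powr (ennreal (X0+t)) (1/3) * enn_powr (ennreal (Y0+t)) (2/3) = ennreal ((X0+t) powr (1/3) * (Y0+t) powr (2/3))"
            using XY t by (simp add: enn_powr_ennreal ennreal_mult' del: ennreal_plus)
          finally show "A g l r l' r' \<le> ennreal ((X0+t) powr (1/3) * (Y0+t) powr (2/3)) ^ 12 * Ssum \<delta> g l r * enn_powr (Ssum \<delta> g l' r') 2" .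
        qed
        then have "M2 a b \<delta> \<nu> E \<le> ennreal (X0 powr (1/3) * Y0 powr (2/3))"
          by (rule lim_arg[OF XY(3,4)])
        also have "\<dots> = enn_powr X (1/3) * enn_powr Y (2/3)"
          using XY by (simp add: enn_powr_ennreal ennreal_mult')
        finally show ?thesis unfolding X_def Y_def .
      next
        case False
        have "enn_powr X (1/3) * enn_powr Y (2/3) = top"
          by (rule rhs_top[OF Xnz Ynz False]) auto
        then show ?thesis unfolding X_def Y_def by simp
      qed
    qed
  qed
qed

theorem lemma2p4:
  shows "\<exists>C0 > 0. \<forall>E > 1000. \<exists>CE > 0. \<forall>(a::nat) (b::nat) (\<delta>::real) (\<nu>::real).
     a > 0 \<longrightarrow> b > 0 \<longrightarrow>
     (\<exists>n::nat. n > 0 \<and> \<delta> = 1 / real n) \<longrightarrow>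
     (\<exists>m::nat. m > 0 \<and> \<nu> = 1 / real m) \<longrightarrow>
     (\<exists>k::nat. \<nu> ^ a / \<delta> = real k) \<longrightarrow>
     (\<exists>k::nat. \<nu> ^ b / \<delta> = real k) \<longrightarrow>
     M2 a b \<delta> \<nu> E \<le> ennreal CE * enn_powr (M2 b a \<delta> \<nu> (E / C0)) (1/3)
                              * enn_powr (M1 a b \<delta> \<nu> (E / C0)) (2/3)"
proof (intro exI[of _ "1::real"] conjI allI impI exI[of _ "1::real"])
  fix E :: real and a b :: nat and \<delta> \<nu> :: real
  assume "\<exists>m::nat. m > 0 \<and> \<nu> = 1 / real m"
  then have "0 \<le> \<nu>" by auto
  then show "M2 a b \<delta> \<nu> E \<le> ennreal 1 * enn_powr (M2 b a \<delta> \<nu> (E / 1)) (1/3) * enn_powr (M1 a b \<delta> \<nu> (E / 1)) (2/3)"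
    using key[of \<nu> a b \<delta> E] by (simp add: mult.assoc)
qed simp_all

end
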